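(* In the setting described in the context, fix any $(s,\mathrm d_{\mathcal S},\bar a,s',\mathrm d'_{\mathcal S},\bar a')$, and let $\mathbf s=(s_1,\dots,s_N)$ be i.i.d. from $\mathrm d_{\mathcal S}$ and $\mathbf s'=(s'_1,\dots,s'_N)$ i.i.d. from $\mathrm d'_{\mathcal S}$. Then for every $\beta$ with $\|\beta-\beta(0)\|_2\le R_\beta$, $$\mathbb E_{\mathrm{init},\mathbf s,\mathbf s'}\|\hat g_\beta(s,\mathbf s,\bar a,s',\mathbf s',\bar a')-g_\beta(s,\mathrm d_{\mathcal S},\bar a,s',\mathrm d'_{\mathcal S},\bar a')\|_2^2\le\mathcal O\Big(\frac{R_\beta^2}{N}\Big).$$
   Context: $\mathcal S$ finite, $\mathcal P(\mathcal S)$ distributions on $\mathcal S$, $\overline{\mathcal A}$ finite. Triples $(s,x,\bar a)$ are vectors in $\mathbb R^d$ with $\|(s,x,\bar a)\|_2\le1$. Initialization: independent $u_j\sim\mathrm{Unif}\{\pm1\}$, $\beta_j(0)\sim\mathcal N(0,I_d/d)$, $j\in[m]$ ($\mathbb E_{\mathrm{init}}$ over it; $u$ fixed). $\sigma(y)=\max\{y,0\}$; $f_\beta(s,x,\bar a)=\frac1{\sqrt m}\sum_ju_j\sigma(\beta_j^\top(s,x,\bar a))$; $F_\beta(s,\mathrm d_{\mathcal S},\bar a)=\mathbb E_{x\sim\mathrm d_{\mathcal S}}f_\beta(s,x,\bar a)$; $F_\beta(s,\mathbf s,\bar a)=\frac1N\sum_{i=1}^Nf_\beta(s,s_i,\bar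 a)$; $\nabla_\beta$ uses $\sigma'(y)=\mathbb 1\{y>0\}$. Function $\xi$ on $\mathcal S\times\mathcal P(\mathcal S)\times\overline{\mathcal A}$, constants $\tau\ge0$, $\mu\in[0,1)$. $\delta_\beta=F_\beta(s,\mathrm d_{\mathcal S},\bar a)-\tau\xi(s,\mathrm d_{\mathcal S},\bar a)-\mu F_\beta(s',\mathrm d'_{\mathcal S},\bar a')$, $g_\beta=\delta_\beta\nabla_\beta F_\beta(s,\mathrm d_{\mathcal S},\bar a)$; $\hat\delta_\beta=F_\beta(s,\mathbf s,\bar a)-\tau\xi(s,\mathrm d_{\mathcal S},\bar a)-\mu F_\beta(s',\mathbf s',\bar a')$, $\hat g_\beta=\hat\delta_\beta\nabla_\beta F_\beta(s,\mathbf s,\bar a)$. Assumption 4: constants $\tau_1,\tau_2,\tau_3\ge0$ with $\xi(s,\mathrm d_{\mathcal S},\bar a)^2\le\tau_1\mathbb E_{x\sim\mathrm d_{\mathcal S}}(f_{\beta(0)}(s,x,\bar a))^2+\tau_2R_\beta^2+\tau_3$ for all arguments. $\mathcal O(\cdot)$ hides constants independent of $R_\beta,m,N$. *)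

theory Defs
  imports "HOL-Probability.Probability"
begin

text \<open>Vectors in R^d are functions 'd => real on a finite index type 'd.
  A parameter beta = (beta_1,...,beta_m) is a function nat => 'd => real, only j < m matter.\<close>

type_synonym 'd param = "nat \<Rightarrow> 'd \<Rightarrow> real"

definition dotp :: "('d::finite \<Rightarrow> real) \<Rightarrow> ('d \<Rightarrow> real) \<Rightarrow> real" where
  "dotp a b = (\<Sum>i\<in>UNIV. a i * b i)"

definition pnorm2 :: "nat \<Rightarrow> ('d::finite) param \<Rightarrow> real" where
  "pnorm2 m b = (\<Sum>j<m. \<Sum>i\<in>UNIV. (b j i)\<^sup>2)"

definition relu :: "real \<Rightarrow> real" where "relu y = max y 0"
definition relu' :: "real \<Rightarrow> real" where "relu' y = (if y > 0 then 1 else 0)"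

definition nn :: "nat \<Rightarrow> (nat \<Rightarrow> real) \<Rightarrow> ('d::finite) param \<Rightarrow> ('d \<Rightarrow> real) \<Rightarrow> real" where
  "nn m u \<beta> z = (1 / sqrt (real m)) * (\<Sum>j<m. u j * relu (dotp (\<beta> j) z))"

definition grad_nn :: "nat \<Rightarrow> (nat \<Rightarrow> real) \<Rightarrow> ('d::finite) param \<Rightarrow> ('d \<Rightarrow> real) \<Rightarrow> 'd param" where
  "grad_nn m u \<beta> z = (\<lambda>j i. if j < m then (1 / sqrt (real m)) * u j * relu' (dotp (\<beta> j) z) * z i else 0)"

text \<open>phi s x a is the vector in R^d representing the triple (s,x,a).\<close>

definition F_pop :: "nat \<Rightarrow> (nat \<Rightarrow> real) \<Rightarrow> ('d::finite) param \<Rightarrow> ('s \<Rightarrow> 's \<Rightarrow> 'a \<Rightarrow> 'd \<Rightarrow> real)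
    \<Rightarrow> 's \<Rightarrow> 's pmf \<Rightarrow> 'a \<Rightarrow> real" where
  "F_pop m u \<beta> \<phi> s dS a = measure_pmf.expectation dS (\<lambda>x. nn m u \<beta> (\<phi> s x a))"

definition gradF_pop :: "nat \<Rightarrow> (nat \<Rightarrow> real) \<Rightarrow> ('d::finite) param \<Rightarrow> ('s \<Rightarrow> 's \<Rightarrow> 'a \<Rightarrow> 'd \<Rightarrow> real)
    \<Rightarrow> 's \<Rightarrow> 's pmf \<Rightarrow> 'a \<Rightarrow> 'd param" where
  "gradF_pop m u \<beta> \<phi> s dS a = (\<lambda>j i. measure_pmf.expectation dS (\<lambda>x. grad_nn m u \<beta> (\<phi> s x a) j i))"

definition F_emp :: "nat \<Rightarrow> (nat \<Rightarrow> real) \<Rightarrow> ('d::finite) param \<Rightarrow> ('s \<Rightarrow> 's \<Rightarrow> 'a \<Rightarrow> 'd \<Rightarrow> real)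
    \<Rightarrow> 's \<Rightarrow> nat \<Rightarrow> (nat \<Rightarrow> 's) \<Rightarrow> 'a \<Rightarrow> real" where
  "F_emp m u \<beta> \<phi> s N ss a = (1 / real N) * (\<Sum>i<N. nn m u \<beta> (\<phi> s (ss i) a))"

definition gradF_emp :: "nat \<Rightarrow> (nat \<Rightarrow> real) \<Rightarrow> ('d::finite) param \<Rightarrow> ('s \<Rightarrow> 's \<Rightarrow> 'a \<Rightarrow> 'd \<Rightarrow> real)
    \<Rightarrow> 's \<Rightarrow> nat \<Rightarrow> (nat \<Rightarrow> 's) \<Rightarrow> 'a \<Rightarrow> 'd param" where
  "gradF_emp m u \<beta> \<phi> s N ss a = (\<lambda>j i. (1 / real N) * (\<Sum>k<N. grad_nn m u \<beta> (\<phi> s (ss k) a) j i))"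

definition g_pop where
  "g_pop m u \<beta> \<phi> \<xi> \<tau> \<mu> s dS a s' dS' a' =
     (let \<delta> = F_pop m u \<beta> \<phi> s dS a - \<tau> * \<xi> s dS a - \<mu> * F_pop m u \<beta> \<phi> s' dS' a'
      in (\<lambda>j i. \<delta> * gradF_pop m u \<beta> \<phi> s dS a j i))"

definition g_emp where
  "g_emp m u \<beta> \<phi> \<xi> \<tau> \<mu> N s dS ss a s' ss' a' =
     (let \<delta> = F_emp m u \<beta> \<phi> s N ss a - \<tau> * \<xi> s dS a - \<mu> * F_emp m u \<beta> \<phi> s' N ss' a'
      in (\<lambda>j i. \<delta> * gradF_emp m u \<beta> \<phi> s N ss a j i))"

definition u_init :: "nat \<Rightarrow> (nat \<Rightarrow> real) pmf" where
  "u_init m = Pi_pmf {..<m} 1 (\<lambda>_. pmf_of_set {-1, 1})"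

definition gauss_init :: "nat \<Rightarrow> ('d::finite) param measure" where
  "gauss_init m = PiM {..<m} (\<lambda>_. PiM (UNIV :: 'd set)
       (\<lambda>_. density lborel (normal_density 0 (1 / sqrt (real CARD('d))))))"

definition samples :: "nat \<Rightarrow> 's pmf \<Rightarrow> (nat \<Rightarrow> 's) pmf" where
  "samples N dS = Pi_pmf {..<N} undefined (\<lambda>_. dS)"

end

theory Submission
  imports Defs
begin


definition gsig :: "'d::finite itself \<Rightarrow> real" where
  "gsig _ = 1 / sqrt (real CARD('d))"

lemma gsig_pos: "gsig (TYPE('d::finite)) > 0"
  by (simp add: gsig_def)

definition gN :: "'d::finite itself \<Rightarrow> real measure" where
  "gN t = density lborel (normal_density 0 (gsig t))"

lemma gauss_init_alt: "gauss_init m = PiM {..<m} (\<lambda>_. PiM (UNIV :: 'd::finite set) (\<lambda>_. gN TYPE('d)))"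
  by (simp add: gauss_init_def gN_def gsig_def)

lemma gN_prob: "prob_space (gN t)"
  unfolding gN_def by (rule prob_space_normal_density) (simp add: gsig_def)

lemma gN_sets[simp]: "sets (gN t) = sets borel"
  by (simp add: gN_def)

lemma gN_comp_meas: "i \<in> I \<Longrightarrow> (\<lambda>r. r i) \<in> borel_measurable (PiM I (\<lambda>_. gN t))"
  using measurable_component_singleton[of i I "\<lambda>_. gN t"]
  by (simp add: measurable_def)

lemma gN_row_prob: "prob_space (PiM (UNIV :: 'd::finite set) (\<lambda>_. gN TYPE('d)))"
  by (intro prob_space_PiM gN_prob)

lemma gauss_prob: "prob_space (gauss_init m :: ('d::finite) param measure)"
  unfolding gauss_init_alt by (intro prob_space_PiM gN_row_prob)

definition gvar :: "'d::finite itself \<Rightarrow> real" where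
  "gvar t = (\<integral>x. normal_density 0 (gsig t) x * x^2 \<partial>lborel)"

lemma gN_sq: "(\<integral>\<^sup>+x. ennreal (x^2) \<partial>gN (TYPE('d::finite))) = ennreal (gvar TYPE('d))"
proof -
  have int: "integrable lborel (\<lambda>x. normal_density 0 (gsig TYPE('d)) x * (x - 0)^2)"
    by (rule integrable_normal_moment) (rule gsig_pos)
  have "(\<integral>\<^sup>+x. ennreal (x^2) \<partial>gN (TYPE('d))) =
     (\<integral>\<^sup>+x. ennreal (normal_density 0 (gsig TYPE('d)) x) * ennreal (x^2) \<partial>lborel)"
    unfolding gN_def by (subst nn_integral_density) auto
  also have "\<dots> = (\<integral>\<^sup>+x. ennreal (normal_density 0 (gsig TYPE('d)) x * x^2) \<partial>lborel)"
    by (intro nn_integral_cong) (simp add: ennreal_mult)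
  also have "\<dots> = ennreal (gvar TYPE('d))"
    unfolding gvar_def using int by (intro nn_integral_eq_integral) auto
  finally show ?thesis .
qed

lemma gauss_coord:
  assumes "j < m"
  shows "(\<integral>\<^sup>+\<beta>0. ennreal ((\<beta>0 j i)^2) \<partial>(gauss_init m :: ('d::finite) param measure)) = ennreal (gvar TYPE('d))"
proof -
  let ?R = "PiM (UNIV :: 'd set) (\<lambda>_. gN TYPE('d))"
  have mi: "(\<lambda>r. r i) \<in> borel_measurable ?R" by (rule gN_comp_meas) simp
  have mi2: "(\<lambda>r. ennreal ((r i)^2)) \<in> borel_measurable ?R" using mi by measurable
  have "(\<integral>\<^sup>+\<beta>0. ennreal ((\<beta>0 j i)^2) \<partial>(gauss_init m :: 'd param measure))
      = (\<integral>\<^sup>+r. ennreal ((r i)^2) \<partial>distr (PiM {..<m} (\<lambda>_. ?R)) ?R (\<lambda>\<omega>. \<omega> j))"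
    unfolding gauss_init_alt
    by (subst nn_integral_distr) (auto simp: assms mi2)
  also have "\<dots> = (\<integral>\<^sup>+r. ennreal ((r i)^2) \<partial>?R)"
    by (subst distr_PiM_component) (auto simp: assms gN_row_prob)
  also have "\<dots> = (\<integral>\<^sup>+x. ennreal (x^2) \<partial>distr ?R (gN TYPE('d)) (\<lambda>\<omega>. \<omega> i))"
    by (subst nn_integral_distr) (auto simp: mi measurable_cong_sets[OF gN_sets refl])
  also have "\<dots> = (\<integral>\<^sup>+x. ennreal (x^2) \<partial>gN TYPE('d))"
    by (subst distr_PiM_component) (auto simp: gN_prob)
  finally show ?thesis using gN_sq by simp
qed



lemma finite_set_Pi_pmf:
  assumes "finite A" "\<And>x. x \<in> A \<Longrightarrow> finite (set_pmf (p x))"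
  shows "finite (set_pmf (Pi_pmf A dflt p))"
  using assms by (subst set_Pi_pmf) (auto intro!: finite_PiE_dflt)

lemma Pi_pmf_pair_comp:
  assumes "finite A" "j \<in> A" "k \<in> A" "j \<noteq> k"
  shows "map_pmf (\<lambda>f. (f j, f k)) (Pi_pmf A dflt p) = pair_pmf (p j) (p k)"
proof -
  define A' where "A' = A - {j}"
  have A: "A = insert j A'" "j \<notin> A'" "finite A'" "k \<in> A'" using assms by (auto simp: A'_def)
  have "map_pmf (\<lambda>f. (f j, f k)) (Pi_pmf A dflt p)
      = map_pmf (\<lambda>(y, f). (y, f k)) (pair_pmf (p j) (Pi_pmf A' dflt p))"
    unfolding A(1) using A assms(4)
    by (subst Pi_pmf_insert) (auto simp: pmf.map_comp o_def case_prod_unfold)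
  also have "\<dots> = pair_pmf (map_pmf id (p j)) (map_pmf (\<lambda>f. f k) (Pi_pmf A' dflt p))"
    by (subst map_pair[symmetric]) (simp add: case_prod_unfold)
  also have "\<dots> = pair_pmf (p j) (p k)"
    using A by (subst Pi_pmf_component) auto
  finally show ?thesis .
qed

lemma expectation_pair_pmf_mult:
  fixes g h :: "_ \<Rightarrow> real"
  assumes "finite (set_pmf p)" "finite (set_pmf q)"
  shows "measure_pmf.expectation (pair_pmf p q) (\<lambda>w. g (fst w) * h (snd w))
       = measure_pmf.expectation p g * measure_pmf.expectation q h"
proof -
  have "measure_pmf.expectation (pair_pmf p q) (\<lambda>w. g (fst w) * h (snd w))
      = (\<Sum>w\<in>set_pmf p \<times> set_pmf q. g (fst w) * h (snd w) * pmf (pair_pmf p q) w)"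
    using assms by (intro integral_measure_pmf_real) auto
  also have "\<dots> = (\<Sum>a\<in>set_pmf p. \<Sum>b\<in>set_pmf q. (g a * pmf p a) * (h b * pmf q b))"
    unfolding sum.cartesian_product by (intro sum.cong) (auto simp: pmf_pair)
  also have "\<dots> = (\<Sum>a\<in>set_pmf p. g a * pmf p a) * (\<Sum>b\<in>set_pmf q. h b * pmf q b)"
    by (simp add: sum_product)
  also have "\<dots> = measure_pmf.expectation p g * measure_pmf.expectation q h"
    using assms by (subst (1 2) integral_measure_pmf_real[where A="set_pmf _"]) auto
  finally show ?thesis .
qed

lemma Pi_pmf_cross:
  fixes g h :: "_ \<Rightarrow> real"
  assumes "finite A" "j \<in> A" "k \<in> A" "\<And>x. x \<in> A \<Longrightarrow> finite (set_pmf (p x))"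
  shows "measure_pmf.expectation (Pi_pmf A dflt p) (\<lambda>y. g (y j) * h (y k))
     = (if j = k then measure_pmf.expectation (p j) (\<lambda>v. g v * h v)
        else measure_pmf.expectation (p j) g * measure_pmf.expectation (p k) h)"
proof (cases "j = k")
  case True
  have "measure_pmf.expectation (Pi_pmf A dflt p) (\<lambda>y. g (y j) * h (y k))
     = measure_pmf.expectation (map_pmf (\<lambda>f. f j) (Pi_pmf A dflt p)) (\<lambda>v. g v * h v)"
    using True by simp
  also have "\<dots> = measure_pmf.expectation (p j) (\<lambda>v. g v * h v)"
    using assms by (subst Pi_pmf_component) auto
  finally show ?thesis using True by simp
next
  case False
  have "measure_pmf.expectation (Pi_pmf A dflt p) (\<lambda>y. g (y j) * h (y k))
     = measure_pmf.expectation (map_pmf (\<lambda>f. (f j, f k)) (Pi_pmf A dflt p)) (\<lambda>w. g (fst w) * h (snd w))"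
    by simp
  also have "\<dots> = measure_pmf.expectation (pair_pmf (p j) (p k)) (\<lambda>w. g (fst w) * h (snd w))"
    using assms False by (subst Pi_pmf_pair_comp) auto
  also have "\<dots> = measure_pmf.expectation (p j) g * measure_pmf.expectation (p k) h"
    using assms by (intro expectation_pair_pmf_mult) auto
  finally show ?thesis using False by simp
qed

lemma Pi_pmf_sq_sum:
  fixes g :: "_ \<Rightarrow> _ \<Rightarrow> real"
  assumes "finite A" "\<And>x. x \<in> A \<Longrightarrow> finite (set_pmf (p x))"
    "\<And>x. x \<in> A \<Longrightarrow> measure_pmf.expectation (p x) (g x) = 0"
  shows "measure_pmf.expectation (Pi_pmf A dflt p) (\<lambda>y. (\<Sum>x\<in>A. g x (y x))\<^sup>2)
     = (\<Sum>x\<in>A. measure_pmf.expectation (p x) (\<lambda>v. (g x v)\<^sup>2))"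
proof -
  have fin: "finite (set_pmf (Pi_pmf A dflt p))" using assms by (intro finite_set_Pi_pmf)
  have "measure_pmf.expectation (Pi_pmf A dflt p) (\<lambda>y. (\<Sum>x\<in>A. g x (y x))\<^sup>2)
      = measure_pmf.expectation (Pi_pmf A dflt p) (\<lambda>y. \<Sum>j\<in>A. \<Sum>k\<in>A. g j (y j) * g k (y k))"
    by (simp add: power2_eq_square sum_product)
  also have "\<dots> = (\<Sum>j\<in>A. \<Sum>k\<in>A. measure_pmf.expectation (Pi_pmf A dflt p) (\<lambda>y. g j (y j) * g k (y k)))"
    using fin by (simp add: Bochner_Integration.integral_sum integrable_measure_pmf_finite)
  also have "\<dots> = (\<Sum>j\<in>A. \<Sum>k\<in>A. if j = k then measure_pmf.expectation (p j) (\<lambda>v. (g j v)\<^sup>2) else 0)"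
    using assms by (intro sum.cong refl, subst Pi_pmf_cross) (auto simp: power2_eq_square)
  also have "\<dots> = (\<Sum>x\<in>A. measure_pmf.expectation (p x) (\<lambda>v. (g x v)\<^sup>2))"
    using assms(1) by (simp add: sum.delta)
  finally show ?thesis .
qed



lemma finite_set_u_init: "finite (set_pmf (u_init m))"
  unfolding u_init_def by (intro finite_set_Pi_pmf) auto

lemma u_init_support: "u \<in> set_pmf (u_init m) \<Longrightarrow> \<bar>u j\<bar> = 1"
  unfolding u_init_def by (subst (asm) set_Pi_pmf) (auto simp: PiE_dflt_def split: if_splits, metis abs_minus_cancel abs_one)

lemma u_init_sq_sum:
  "measure_pmf.expectation (u_init m) (\<lambda>u. (\<Sum>j<m. u j * r j)\<^sup>2) = (\<Sum>j<m. (r j)\<^sup>2)"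
proof -
  have "measure_pmf.expectation (u_init m) (\<lambda>u. (\<Sum>j<m. u j * r j)\<^sup>2)
    = (\<Sum>j<m. measure_pmf.expectation (pmf_of_set {-1, 1::real}) (\<lambda>v. (v * r j)\<^sup>2))"
    unfolding u_init_def by (rule Pi_pmf_sq_sum) (auto simp: integral_pmf_of_set)
  also have "\<dots> = (\<Sum>j<m. (r j)\<^sup>2)"
    by (intro sum.cong refl) (simp add: integral_pmf_of_set power2_eq_square)
  finally show ?thesis .
qed

lemma finite_set_samples: "finite (set_pmf (samples N (p :: ('s::finite) pmf)))"
  unfolding samples_def by (intro finite_set_Pi_pmf) auto

lemma samples_var:
  fixes p :: "('s::finite) pmf" and h :: "'s \<Rightarrow> real"
  assumes "N > 0"
  shows "measure_pmf.expectation (samples N p)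
            (\<lambda>ss. ((1 / real N) * (\<Sum>k<N. h (ss k)) - measure_pmf.expectation p h)\<^sup>2)
         \<le> measure_pmf.expectation p (\<lambda>x. (h x)\<^sup>2) / real N"
proof -
  define c where "c = measure_pmf.expectation p h"
  have intp: "integrable (measure_pmf p) f" for f :: "'s \<Rightarrow> real"
    by (intro integrable_measure_pmf_finite) auto
  have eq: "((1 / real N) * (\<Sum>k<N. h (ss k)) - c)\<^sup>2 = (1 / real N)\<^sup>2 * (\<Sum>k<N. h (ss k) - c)\<^sup>2" for ss
  proof -
    have "(1 / real N) * (\<Sum>k<N. h (ss k)) - c = (1 / real N) * (\<Sum>k<N. h (ss k) - c)"
      using assms by (simp add: sum_subtractf field_simps)
    then show ?thesis by (simp add: power_divide)
  qed
  have "measure_pmf.expectation (samples N p) (\<lambda>ss. ((1 / real N) * (\<Sum>k<N. h (ss k)) - c)\<^sup>2)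
     = (1 / real N)\<^sup>2 * measure_pmf.expectation (samples N p) (\<lambda>ss. (\<Sum>k<N. h (ss k) - c)\<^sup>2)"
    unfolding eq by simp
  also have "measure_pmf.expectation (samples N p) (\<lambda>ss. (\<Sum>k<N. h (ss k) - c)\<^sup>2)
     = (\<Sum>k<N. measure_pmf.expectation p (\<lambda>v. (h v - c)\<^sup>2))"
    unfolding samples_def
    by (rule Pi_pmf_sq_sum) (auto simp: c_def Bochner_Integration.integral_diff intp prob_space_measure_pmf prob_space.prob_space)
  also have "\<dots> = real N * measure_pmf.expectation p (\<lambda>v. (h v - c)\<^sup>2)" by simp
  also have "measure_pmf.expectation p (\<lambda>v. (h v - c)\<^sup>2) = measure_pmf.expectation p (\<lambda>v. (h v)\<^sup>2) - c\<^sup>2"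
  proof -
    have "measure_pmf.expectation p (\<lambda>v. (h v - c)\<^sup>2) = measure_pmf.expectation p (\<lambda>v. (h v)\<^sup>2 - 2 * c * h v + c\<^sup>2)"
      by (intro Bochner_Integration.integral_cong refl) (simp add: power2_diff)
    also have "\<dots> = measure_pmf.expectation p (\<lambda>v. (h v)\<^sup>2) - 2 * c * c + c\<^sup>2"
      by (simp add: Bochner_Integration.integral_diff Bochner_Integration.integral_add intp c_def)
    finally show ?thesis by (simp add: power2_eq_square)
  qed
  finally have "measure_pmf.expectation (samples N p) (\<lambda>ss. ((1 / real N) * (\<Sum>k<N. h (ss k)) - c)\<^sup>2)
     = (measure_pmf.expectation p (\<lambda>v. (h v)\<^sup>2) - c\<^sup>2) / real N"
    using assms by (simp add: power2_eq_square field_simps)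
  also have "\<dots> \<le> measure_pmf.expectation p (\<lambda>v. (h v)\<^sup>2) / real N"
    using assms by (intro divide_right_mono) auto
  finally show ?thesis by (simp add: c_def)
qed



lemma dotp_cs: "(dotp a z)\<^sup>2 \<le> dotp a a * dotp z z"
  unfolding dotp_def using Cauchy_Schwarz_ineq_sum[of a b UNIV for b]
  by (simp add: power2_eq_square)

lemma dotp_self_nonneg: "dotp a a \<ge> 0"
  unfolding dotp_def by (intro sum_nonneg) auto

lemma relu_lip: "\<bar>relu x - relu y\<bar> \<le> \<bar>x - y\<bar>"
  unfolding relu_def by auto

lemma relu_sq: "(relu x)\<^sup>2 \<le> x\<^sup>2"
  unfolding relu_def by (auto simp: max_def power2_eq_square)

lemma nn_diff_sq:
  assumes m: "m > 0" and u: "\<And>j. \<bar>u j\<bar> = 1" and z: "dotp z z \<le> 1"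
  shows "(nn m u \<beta> z - nn m u \<beta>0 z)\<^sup>2 \<le> pnorm2 m (\<lambda>j i. \<beta> j i - \<beta>0 j i)"
proof -
  define a where "a j = u j * (relu (dotp (\<beta> j) z) - relu (dotp (\<beta>0 j) z))" for j
  have "nn m u \<beta> z - nn m u \<beta>0 z = (1 / sqrt (real m)) * (\<Sum>j<m. a j)"
    unfolding nn_def a_def by (simp add: sum_subtractf right_diff_distrib algebra_simps)
  then have "(nn m u \<beta> z - nn m u \<beta>0 z)\<^sup>2 = (1 / real m) * (\<Sum>j<m. a j)\<^sup>2"
    using m by (simp add: power_mult_distrib power_divide)
  also have "\<dots> \<le> (1 / real m) * ((\<Sum>j<m. (a j)\<^sup>2) * real m)"
    using sum_squared_le_sum_of_squares[of a "{..<m}"] by (intro mult_left_mono) auto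
  also have "\<dots> = (\<Sum>j<m. (a j)\<^sup>2)" using m by simp
  also have "\<dots> \<le> (\<Sum>j<m. \<Sum>i\<in>UNIV. (\<beta> j i - \<beta>0 j i)\<^sup>2)"
  proof (intro sum_mono)
    fix j
    define d where "d = (\<lambda>i. \<beta> j i - \<beta>0 j i)"
    have "(a j)\<^sup>2 = (relu (dotp (\<beta> j) z) - relu (dotp (\<beta>0 j) z))\<^sup>2"
      unfolding a_def using u[of j] by (simp add: power_mult_distrib abs_square_eq_1[symmetric])
    also have "\<dots> \<le> (dotp (\<beta> j) z - dotp (\<beta>0 j) z)\<^sup>2"
      using relu_lip by (metis abs_le_square_iff)
    also have "dotp (\<beta> j) z - dotp (\<beta>0 j) z = dotp d z"
      unfolding dotp_def d_def by (simp add: sum_subtractf left_diff_distrib)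
    also have "(dotp d z)\<^sup>2 \<le> dotp d d * dotp z z" by (rule dotp_cs)
    also have "\<dots> \<le> dotp d d" using z dotp_self_nonneg[of d] dotp_self_nonneg[of z]
      by (simp add: mult_left_le)
    also have "dotp d d = (\<Sum>i\<in>UNIV. (\<beta> j i - \<beta>0 j i)\<^sup>2)"
      unfolding dotp_def d_def by (simp add: power2_eq_square)
    finally show "(a j)\<^sup>2 \<le> (\<Sum>i\<in>UNIV. (\<beta> j i - \<beta>0 j i)\<^sup>2)" .
  qed
  finally show ?thesis unfolding pnorm2_def .
qed

lemma nn_sq_bound:
  assumes m: "m > 0" and u: "\<And>j. \<bar>u j\<bar> = 1" and z: "dotp z z \<le> 1"
    and R: "pnorm2 m (\<lambda>j i. \<beta> j i - \<beta>0 j i) \<le> R\<^sup>2"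
  shows "(nn m u \<beta> z)\<^sup>2 \<le> 2 * (nn m u \<beta>0 z)\<^sup>2 + 2 * R\<^sup>2"
proof -
  have "(nn m u \<beta> z)\<^sup>2 \<le> 2 * (nn m u \<beta>0 z)\<^sup>2 + 2 * (nn m u \<beta> z - nn m u \<beta>0 z)\<^sup>2"
  proof -
    have "0 \<le> (nn m u \<beta> z - 2 * nn m u \<beta>0 z)\<^sup>2" by simp
    then show ?thesis by (simp add: power2_eq_square algebra_simps)
  qed
  moreover have "(nn m u \<beta> z - nn m u \<beta>0 z)\<^sup>2 \<le> pnorm2 m (\<lambda>j i. \<beta> j i - \<beta>0 j i)"
    by (intro nn_diff_sq m u z)
  ultimately show ?thesis using R by linarith
qed

lemma grad_norm:
  assumes m: "m > 0" and u: "\<And>j. \<bar>u j\<bar> = 1" and z: "dotp z z \<le> 1"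
  shows "pnorm2 m (grad_nn m u \<beta> z) \<le> 1"
proof -
  have "pnorm2 m (grad_nn m u \<beta> z) = (\<Sum>j<m. (1 / real m) * (relu' (dotp (\<beta> j) z))\<^sup>2 * dotp z z)"
    unfolding pnorm2_def
  proof (intro sum.cong refl)
    fix j assume j: "j \<in> {..<m}"
    have uj: "(u j)\<^sup>2 = 1" using u[of j] abs_square_eq_1 by blast
    have sm: "(1 / sqrt (real m))\<^sup>2 = 1 / real m" using m by (simp add: power_divide)
    have "(\<Sum>i\<in>UNIV. (grad_nn m u \<beta> z j i)\<^sup>2)
        = (\<Sum>i\<in>UNIV. (1 / sqrt (real m))\<^sup>2 * (u j)\<^sup>2 * (relu' (dotp (\<beta> j) z))\<^sup>2 * (z i * z i))"
      unfolding grad_nn_def using j by (intro sum.cong refl) (simp add: power_mult_distrib power2_eq_square)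
    also have "\<dots> = (1 / real m) * (relu' (dotp (\<beta> j) z))\<^sup>2 * dotp z z"
      unfolding sm uj dotp_def by (simp add: sum_distrib_left)
    finally show "(\<Sum>i\<in>UNIV. (grad_nn m u \<beta> z j i)\<^sup>2) = (1 / real m) * (relu' (dotp (\<beta> j) z))\<^sup>2 * dotp z z" .
  qed
  also have "\<dots> \<le> (\<Sum>j<m. (1 / real m))"
    using z dotp_self_nonneg[of z]
    by (intro sum_mono) (auto simp: relu'_def divide_right_mono)
  also have "\<dots> = 1" using m by simp
  finally show ?thesis .
qed

lemma avg_sq_le:
  fixes f :: "nat \<Rightarrow> real"
  assumes "N > 0"
  shows "((1 / real N) * (\<Sum>k<N. f k))\<^sup>2 \<le> (1 / real N) * (\<Sum>k<N. (f k)\<^sup>2)"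
proof -
  have "((1 / real N) * (\<Sum>k<N. f k))\<^sup>2 = (1 / real N)\<^sup>2 * (\<Sum>k<N. f k)\<^sup>2"
    by (simp add: power_divide field_simps)
  also have "\<dots> \<le> (1 / real N)\<^sup>2 * ((\<Sum>k<N. (f k)\<^sup>2) * real N)"
    using sum_squared_le_sum_of_squares[of f "{..<N}"] by (intro mult_left_mono) auto
  also have "\<dots> = (1 / real N) * (\<Sum>k<N. (f k)\<^sup>2)" using assms by (simp add: power2_eq_square)
  finally show ?thesis .
qed

lemma gradF_emp_norm:
  assumes m: "m > 0" and N: "N > 0" and u: "\<And>j. \<bar>u j\<bar> = 1" and z: "\<And>s x a. dotp (\<phi> s x a) (\<phi> s x a) \<le> 1"
  shows "pnorm2 m (gradF_emp m u \<beta> \<phi> s N ss a) \<le> 1"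
proof -
  have "pnorm2 m (gradF_emp m u \<beta> \<phi> s N ss a)
      \<le> (\<Sum>j<m. \<Sum>i\<in>UNIV. (1 / real N) * (\<Sum>k<N. (grad_nn m u \<beta> (\<phi> s (ss k) a) j i)\<^sup>2))"
    unfolding pnorm2_def gradF_emp_def by (intro sum_mono avg_sq_le N)
  also have "\<dots> = (1 / real N) * (\<Sum>k<N. pnorm2 m (grad_nn m u \<beta> (\<phi> s (ss k) a)))"
    unfolding pnorm2_def by (simp add: sum_distrib_left sum.swap[of _ "{..<N}"])
  also have "\<dots> \<le> (1 / real N) * (\<Sum>k<N. 1)"
    by (intro mult_left_mono sum_mono grad_norm m u z) auto
  also have "\<dots> = 1" using N by simp
  finally show ?thesis .
qed

lemma exp_sq_le:
  fixes p :: "('s::finite) pmf" and h :: "'s \<Rightarrow> real"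
  shows "(measure_pmf.expectation p h)\<^sup>2 \<le> measure_pmf.expectation p (\<lambda>x. (h x)\<^sup>2)"
proof -
  define c where "c = measure_pmf.expectation p h"
  have intp: "integrable (measure_pmf p) f" for f :: "'s \<Rightarrow> real"
    by (intro integrable_measure_pmf_finite) auto
  have "0 \<le> measure_pmf.expectation p (\<lambda>v. (h v - c)\<^sup>2)" by (intro integral_nonneg_AE) auto
  also have "measure_pmf.expectation p (\<lambda>v. (h v - c)\<^sup>2) = measure_pmf.expectation p (\<lambda>v. (h v)\<^sup>2 - 2 * c * h v + c\<^sup>2)"
    by (intro Bochner_Integration.integral_cong refl) (simp add: power2_diff)
  also have "\<dots> = measure_pmf.expectation p (\<lambda>v. (h v)\<^sup>2) - 2 * c * c + c\<^sup>2"
    by (simp add: Bochner_Integration.integral_diff Bochner_Integration.integral_add intp c_def)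
  finally show ?thesis by (simp add: c_def power2_eq_square)
qed



lemma pnorm2_nonneg: "pnorm2 m X \<ge> 0"
  unfolding pnorm2_def by (intro sum_nonneg) auto

lemma pnorm2_split:
  "pnorm2 m (\<lambda>j i. a * X j i - b * Y j i)
     \<le> 2 * (a - b)\<^sup>2 * pnorm2 m X + 2 * b\<^sup>2 * pnorm2 m (\<lambda>j i. X j i - Y j i)"
proof -
  have pt: "(a * x - b * y)\<^sup>2 \<le> 2 * (a - b)\<^sup>2 * x\<^sup>2 + 2 * b\<^sup>2 * (x - y)\<^sup>2" for x y :: real
  proof -
    have e: "a * x - b * y = (a - b) * x + b * (x - y)" by (simp add: algebra_simps)
    have "0 \<le> ((a - b) * x - b * (x - y))\<^sup>2" by simp
    then show ?thesis unfolding e by (simp add: power2_eq_square algebra_simps)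
  qed
  have "pnorm2 m (\<lambda>j i. a * X j i - b * Y j i)
     \<le> (\<Sum>j<m. \<Sum>i\<in>UNIV. 2 * (a - b)\<^sup>2 * (X j i)\<^sup>2 + 2 * b\<^sup>2 * (X j i - Y j i)\<^sup>2)"
    unfolding pnorm2_def by (intro sum_mono pt)
  also have "\<dots> = 2 * (a - b)\<^sup>2 * pnorm2 m X + 2 * b\<^sup>2 * pnorm2 m (\<lambda>j i. X j i - Y j i)"
    unfolding pnorm2_def by (simp add: sum.distrib sum_distrib_left)
  finally show ?thesis .
qed

lemma grad_dev:
  fixes dS :: "('s::finite) pmf"
  assumes m: "m > 0" and N: "N > 0" and u: "\<And>j. \<bar>u j\<bar> = 1" and z: "\<And>s x a. dotp (\<phi> s x a) (\<phi> s x a) \<le> 1"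
  shows "measure_pmf.expectation (samples N dS)
     (\<lambda>ss. pnorm2 m (\<lambda>j i. gradF_emp m u \<beta> \<phi> s N ss a j i - gradF_pop m u \<beta> \<phi> s dS a j i)) \<le> 1 / real N"
proof -
  have ints: "integrable (measure_pmf (samples N dS)) f" for f :: "_ \<Rightarrow> real"
    by (intro integrable_measure_pmf_finite finite_set_samples)
  have intp: "integrable (measure_pmf dS) f" for f :: "'s \<Rightarrow> real"
    by (intro integrable_measure_pmf_finite) auto
  have "measure_pmf.expectation (samples N dS)
     (\<lambda>ss. pnorm2 m (\<lambda>j i. gradF_emp m u \<beta> \<phi> s N ss a j i - gradF_pop m u \<beta> \<phi> s dS a j i))
    = (\<Sum>j<m. \<Sum>i\<in>UNIV. measure_pmf.expectation (samples N dS)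
        (\<lambda>ss. ((1 / real N) * (\<Sum>k<N. grad_nn m u \<beta> (\<phi> s (ss k) a) j i)
               - measure_pmf.expectation dS (\<lambda>x. grad_nn m u \<beta> (\<phi> s x a) j i))\<^sup>2))"
    unfolding pnorm2_def gradF_emp_def gradF_pop_def
    by (simp add: Bochner_Integration.integral_sum ints)
  also have "\<dots> \<le> (\<Sum>j<m. \<Sum>i\<in>UNIV. measure_pmf.expectation dS (\<lambda>x. (grad_nn m u \<beta> (\<phi> s x a) j i)\<^sup>2) / real N)"
    by (intro sum_mono samples_var N)
  also have "\<dots> = measure_pmf.expectation dS (\<lambda>x. pnorm2 m (grad_nn m u \<beta> (\<phi> s x a))) / real N"
    unfolding pnorm2_def by (simp add: Bochner_Integration.integral_sum intp sum_divide_distrib)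
  also have "\<dots> \<le> 1 / real N"
  proof (intro divide_right_mono)
    have "measure_pmf.expectation dS (\<lambda>x. pnorm2 m (grad_nn m u \<beta> (\<phi> s x a))) \<le> measure_pmf.expectation dS (\<lambda>x. 1)"
      by (intro integral_mono intp grad_norm m u z)
    then show "measure_pmf.expectation dS (\<lambda>x. pnorm2 m (grad_nn m u \<beta> (\<phi> s x a))) \<le> 1"
      by (simp add: prob_space.prob_space prob_space_measure_pmf)
  qed simp
  finally show ?thesis .
qed



lemma inner_bound:
  fixes dS dS' :: "('s::finite) pmf" and \<phi> :: "'s \<Rightarrow> 's \<Rightarrow> 'a \<Rightarrow> 'd::finite \<Rightarrow> real"
  assumes m: "m > 0" and N: "N > 0" and u: "\<And>j. \<bar>u j\<bar> = 1" and z: "\<And>s x a. dotp (\<phi> s x a) (\<phi> s x a) \<le> 1"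
    and R: "pnorm2 m (\<lambda>j i. \<beta> j i - \<beta>0 j i) \<le> R\<^sup>2"
    and mu: "0 \<le> \<mu>" "\<mu> < 1"
  shows "measure_pmf.expectation (pair_pmf (samples N dS) (samples N dS'))
     (\<lambda>w. pnorm2 m (\<lambda>j i. g_emp m u \<beta> \<phi> \<xi> \<tau> \<mu> N s dS (fst w) a s' (snd w) a' j i
              - g_pop m u \<beta> \<phi> \<xi> \<tau> \<mu> s dS a s' dS' a' j i))
    \<le> (20 * measure_pmf.expectation dS (\<lambda>x. (nn m u \<beta>0 (\<phi> s x a))\<^sup>2)
       + 20 * measure_pmf.expectation dS' (\<lambda>x. (nn m u \<beta>0 (\<phi> s' x a'))\<^sup>2)
       + 40 * R\<^sup>2 + 6 * \<tau>\<^sup>2 * (\<xi> s dS a)\<^sup>2) / real N"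
proof -
  define W where "W = pair_pmf (samples N dS) (samples N dS')"
  define h1 where "h1 x = nn m u \<beta> (\<phi> s x a)" for x
  define h2 where "h2 x = nn m u \<beta> (\<phi> s' x a')" for x
  define F1 where "F1 = F_pop m u \<beta> \<phi> s dS a"
  define F2 where "F2 = F_pop m u \<beta> \<phi> s' dS' a'"
  define \<delta> where "\<delta> = F1 - \<tau> * \<xi> s dS a - \<mu> * F2"
  define A where "A ss = ((1 / real N) * (\<Sum>k<N. h1 (ss k)) - measure_pmf.expectation dS h1)\<^sup>2" for ss
  define B where "B ss = ((1 / real N) * (\<Sum>k<N. h2 (ss k)) - measure_pmf.expectation dS' h2)\<^sup>2" for ss
  define Dn where "Dn ss = pnorm2 m (\<lambda>j i. gradF_emp m u \<beta> \<phi> s N ss a j i - gradF_pop m u \<beta> \<phi> s dS a j i)" for ss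
  define P1 where "P1 = measure_pmf.expectation dS (\<lambda>x. (h1 x)\<^sup>2)"
  define P2 where "P2 = measure_pmf.expectation dS' (\<lambda>x. (h2 x)\<^sup>2)"
  define Q1 where "Q1 = measure_pmf.expectation dS (\<lambda>x. (nn m u \<beta>0 (\<phi> s x a))\<^sup>2)"
  define Q2 where "Q2 = measure_pmf.expectation dS' (\<lambda>x. (nn m u \<beta>0 (\<phi> s' x a'))\<^sup>2)"
  have finW: "finite (set_pmf W)" unfolding W_def by (auto intro!: finite_set_samples)
  have intW: "integrable (measure_pmf W) f" for f :: "_ \<Rightarrow> real"
    by (intro integrable_measure_pmf_finite finW)
  have intp: "integrable (measure_pmf p) f" for f :: "'s \<Rightarrow> real" and p
    by (intro integrable_measure_pmf_finite) auto
  have pw: "pnorm2 m (\<lambda>j i. g_emp m u \<beta> \<phi> \<xi> \<tau> \<mu> N s dS (fst w) a s' (snd w) a' j i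
              - g_pop m u \<beta> \<phi> \<xi> \<tau> \<mu> s dS a s' dS' a' j i)
        \<le> 4 * A (fst w) + 4 * B (snd w) + 2 * \<delta>\<^sup>2 * Dn (fst w)" for w
  proof -
    define dh where "dh = F_emp m u \<beta> \<phi> s N (fst w) a - \<tau> * \<xi> s dS a - \<mu> * F_emp m u \<beta> \<phi> s' N (snd w) a'"
    have e: "dh - \<delta> = (F_emp m u \<beta> \<phi> s N (fst w) a - F1) - \<mu> * (F_emp m u \<beta> \<phi> s' N (snd w) a' - F2)"
      unfolding dh_def \<delta>_def by (simp add: algebra_simps)
    have A': "A (fst w) = (F_emp m u \<beta> \<phi> s N (fst w) a - F1)\<^sup>2"
      unfolding A_def F_emp_def F1_def F_pop_def h1_def ..
    have B': "B (snd w) = (F_emp m u \<beta> \<phi> s' N (snd w) a' - F2)\<^sup>2"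
      unfolding B_def F_emp_def F2_def F_pop_def h2_def ..
    have "(dh - \<delta>)\<^sup>2 \<le> 2 * A (fst w) + 2 * B (snd w)"
    proof -
      define x where "x = F_emp m u \<beta> \<phi> s N (fst w) a - F1"
      define y where "y = F_emp m u \<beta> \<phi> s' N (snd w) a' - F2"
      have "(x - \<mu> * y)\<^sup>2 \<le> 2 * x\<^sup>2 + 2 * (\<mu> * y)\<^sup>2"
      proof -
        have "0 \<le> (x + \<mu> * y)\<^sup>2" by simp
        then show ?thesis by (simp add: power2_eq_square algebra_simps)
      qed
      also have "(\<mu> * y)\<^sup>2 \<le> y\<^sup>2"
        using mu by (simp add: power_mult_distrib mult_le_one power_le_one mult_left_le_one_le)
      finally show ?thesis unfolding e A' B' x_def[symmetric] y_def[symmetric] by linarith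
    qed
    moreover have "pnorm2 m (gradF_emp m u \<beta> \<phi> s N (fst w) a) \<le> 1"
      by (intro gradF_emp_norm m N u z)
    moreover have "pnorm2 m (\<lambda>j i. g_emp m u \<beta> \<phi> \<xi> \<tau> \<mu> N s dS (fst w) a s' (snd w) a' j i
              - g_pop m u \<beta> \<phi> \<xi> \<tau> \<mu> s dS a s' dS' a' j i)
       \<le> 2 * (dh - \<delta>)\<^sup>2 * pnorm2 m (gradF_emp m u \<beta> \<phi> s N (fst w) a) + 2 * \<delta>\<^sup>2 * Dn (fst w)"
      unfolding g_emp_def g_pop_def Let_def dh_def[symmetric] F1_def[symmetric] F2_def[symmetric]
        \<delta>_def[symmetric] Dn_def by (rule pnorm2_split)
    moreover have "0 \<le> (dh - \<delta>)\<^sup>2" by simp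
    ultimately show ?thesis
      by (smt (verit, best) mult_left_le mult_right_mono)
  qed
  have "measure_pmf.expectation W
     (\<lambda>w. pnorm2 m (\<lambda>j i. g_emp m u \<beta> \<phi> \<xi> \<tau> \<mu> N s dS (fst w) a s' (snd w) a' j i
              - g_pop m u \<beta> \<phi> \<xi> \<tau> \<mu> s dS a s' dS' a' j i))
     \<le> measure_pmf.expectation W (\<lambda>w. 4 * A (fst w) + 4 * B (snd w) + 2 * \<delta>\<^sup>2 * Dn (fst w))"
    by (intro integral_mono intW pw)
  also have "\<dots> = 4 * measure_pmf.expectation (samples N dS) A + 4 * measure_pmf.expectation (samples N dS') B
       + 2 * \<delta>\<^sup>2 * measure_pmf.expectation (samples N dS) Dn"
    unfolding W_def by (simp add: Bochner_Integration.integral_add intW[unfolded W_def])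
  also have "\<dots> \<le> 4 * (P1 / real N) + 4 * (P2 / real N) + 2 * \<delta>\<^sup>2 * (1 / real N)"
  proof -
    have "measure_pmf.expectation (samples N dS) A \<le> P1 / real N"
      unfolding A_def P1_def by (rule samples_var[OF N])
    moreover have "measure_pmf.expectation (samples N dS') B \<le> P2 / real N"
      unfolding B_def P2_def by (rule samples_var[OF N])
    moreover have "measure_pmf.expectation (samples N dS) Dn \<le> 1 / real N"
      unfolding Dn_def by (rule grad_dev[OF m N u z])
    ultimately show ?thesis by (intro add_mono mult_left_mono) auto
  qed
  also have "\<dots> \<le> (10 * P1 + 10 * P2 + 6 * \<tau>\<^sup>2 * (\<xi> s dS a)\<^sup>2) / real N"
  proof -
    have F1: "F1\<^sup>2 \<le> P1" unfolding F1_def F_pop_def P1_def h1_def by (rule exp_sq_le)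
    have F2: "F2\<^sup>2 \<le> P2" unfolding F2_def F_pop_def P2_def h2_def by (rule exp_sq_le)
    have "\<delta>\<^sup>2 \<le> 3 * (F1\<^sup>2 + (\<tau> * \<xi> s dS a)\<^sup>2 + (\<mu> * F2)\<^sup>2)"
    proof -
      define p where "p = F1"
      define q where "q = \<tau> * \<xi> s dS a"
      define r where "r = \<mu> * F2"
      have "(p - q - r)\<^sup>2 \<le> 3 * (p\<^sup>2 + q\<^sup>2 + r\<^sup>2)"
      proof -
        have "0 \<le> (p + q)\<^sup>2 + (p + r)\<^sup>2 + (q - r)\<^sup>2" by simp
        then show ?thesis by (simp add: power2_eq_square algebra_simps)
      qed
      then show ?thesis unfolding \<delta>_def p_def q_def r_def .
    qed
    also have "(\<mu> * F2)\<^sup>2 \<le> F2\<^sup>2"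
      using mu by (simp add: power_mult_distrib mult_le_one power_le_one mult_left_le_one_le)
    finally have dl: "\<delta>\<^sup>2 \<le> 3 * (P1 + \<tau>\<^sup>2 * (\<xi> s dS a)\<^sup>2 + P2)"
      using F1 F2 by (simp add: power_mult_distrib)
    have "4 * P1 + 4 * P2 + 2 * \<delta>\<^sup>2 \<le> 10 * P1 + 10 * P2 + 6 * \<tau>\<^sup>2 * (\<xi> s dS a)\<^sup>2"
      using dl[unfolded distrib_left] by (simp add: mult.assoc)
    then have "(4 * P1 + 4 * P2 + 2 * \<delta>\<^sup>2) / real N \<le> (10 * P1 + 10 * P2 + 6 * \<tau>\<^sup>2 * (\<xi> s dS a)\<^sup>2) / real N"
      by (intro divide_right_mono) auto
    moreover have "4 * (P1 / real N) + 4 * (P2 / real N) + 2 * \<delta>\<^sup>2 * (1 / real N) = (4 * P1 + 4 * P2 + 2 * \<delta>\<^sup>2) / real N"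
      by (simp add: add_divide_distrib)
    ultimately show ?thesis by simp
  qed
  also have "\<dots> \<le> (20 * Q1 + 20 * Q2 + 40 * R\<^sup>2 + 6 * \<tau>\<^sup>2 * (\<xi> s dS a)\<^sup>2) / real N"
  proof -
    have "P1 \<le> measure_pmf.expectation dS (\<lambda>x. 2 * (nn m u \<beta>0 (\<phi> s x a))\<^sup>2 + 2 * R\<^sup>2)"
      unfolding P1_def h1_def by (intro integral_mono intp nn_sq_bound m u z R)
    also have "\<dots> = 2 * Q1 + 2 * R\<^sup>2"
      unfolding Q1_def by (simp add: Bochner_Integration.integral_add intp prob_space.prob_space prob_space_measure_pmf)
    finally have 1: "P1 \<le> 2 * Q1 + 2 * R\<^sup>2" .
    have "P2 \<le> measure_pmf.expectation dS' (\<lambda>x. 2 * (nn m u \<beta>0 (\<phi> s' x a'))\<^sup>2 + 2 * R\<^sup>2)"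
      unfolding P2_def h2_def by (intro integral_mono intp nn_sq_bound m u z R)
    also have "\<dots> = 2 * Q2 + 2 * R\<^sup>2"
      unfolding Q2_def by (simp add: Bochner_Integration.integral_add intp prob_space.prob_space prob_space_measure_pmf)
    finally have 2: "P2 \<le> 2 * Q2 + 2 * R\<^sup>2" .
    show ?thesis using 1 2 N by (intro divide_right_mono) auto
  qed
  finally show ?thesis unfolding W_def Q1_def Q2_def .
qed



lemma meas_coord:
  assumes "j < m"
  shows "(\<lambda>\<beta>0. \<beta>0 j i) \<in> borel_measurable (gauss_init m :: ('d::finite) param measure)"
proof -
  let ?R = "PiM (UNIV :: 'd set) (\<lambda>_. gN TYPE('d))"
  have 1: "(\<lambda>\<beta>0. \<beta>0 j) \<in> measurable (PiM {..<m} (\<lambda>_. ?R)) ?R"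
    using assms by (intro measurable_component_singleton) auto
  have 2: "(\<lambda>r. r i) \<in> borel_measurable ?R" by (rule gN_comp_meas) simp
  show ?thesis unfolding gauss_init_alt using measurable_comp[OF 1 2] by (simp add: o_def)
qed

lemma meas_nn: "(\<lambda>\<beta>0. nn m u \<beta>0 z) \<in> borel_measurable (gauss_init m :: ('d::finite) param measure)"
proof -
  have *: "(\<lambda>\<beta>0. \<Sum>j<m. u j * max (\<Sum>i\<in>UNIV. \<beta>0 j i * z i) 0) \<in> borel_measurable (gauss_init m :: 'd param measure)"
  proof (rule borel_measurable_sum)
    fix j assume "j \<in> {..<m}"
    then have [measurable]: "\<And>i. (\<lambda>\<beta>0. \<beta>0 j i) \<in> borel_measurable (gauss_init m :: 'd param measure)"
      by (intro meas_coord) auto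
    show "(\<lambda>\<beta>0. u j * max (\<Sum>i\<in>UNIV. \<beta>0 j i * z i) 0) \<in> borel_measurable (gauss_init m :: 'd param measure)"
      by measurable
  qed
  show ?thesis unfolding nn_def relu_def dotp_def using * by measurable
qed

lemma exp_finite_sum:
  fixes d :: "('s::finite) pmf" and f :: "'s \<Rightarrow> real"
  shows "measure_pmf.expectation d f = (\<Sum>x\<in>UNIV. f x * pmf d x)"
  by (rule integral_measure_pmf_real) auto

lemma meas_Q: "(\<lambda>\<beta>0. measure_pmf.expectation (d :: ('s::finite) pmf) (\<lambda>x. (nn m u \<beta>0 (\<phi> x))\<^sup>2))
   \<in> borel_measurable (gauss_init m :: ('d::finite) param measure)"
  unfolding exp_finite_sum
proof (intro borel_measurable_sum borel_measurable_times borel_measurable_const borel_measurable_power)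
  fix x show "(\<lambda>\<beta>0. nn m u \<beta>0 (\<phi> x)) \<in> borel_measurable (gauss_init m :: 'd param measure)"
    by (rule meas_nn)
qed

lemma u_avg:
  assumes m: "m > 0" and z: "dotp z z \<le> 1"
  shows "measure_pmf.expectation (u_init m) (\<lambda>u. (nn m u \<beta>0 z)\<^sup>2) \<le> (1 / real m) * pnorm2 m \<beta>0"
proof -
  have "measure_pmf.expectation (u_init m) (\<lambda>u. (nn m u \<beta>0 z)\<^sup>2)
     = measure_pmf.expectation (u_init m) (\<lambda>u. (1 / real m) * (\<Sum>j<m. u j * relu (dotp (\<beta>0 j) z))\<^sup>2)"
    unfolding nn_def using m by (simp add: power_mult_distrib power_divide)
  also have "\<dots> = (1 / real m) * (\<Sum>j<m. (relu (dotp (\<beta>0 j) z))\<^sup>2)"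
    by (simp add: u_init_sq_sum)
  also have "\<dots> \<le> (1 / real m) * pnorm2 m \<beta>0"
    unfolding pnorm2_def
  proof (intro mult_left_mono sum_mono)
    fix j
    have "(relu (dotp (\<beta>0 j) z))\<^sup>2 \<le> (dotp (\<beta>0 j) z)\<^sup>2" by (rule relu_sq)
    also have "\<dots> \<le> dotp (\<beta>0 j) (\<beta>0 j) * dotp z z" by (rule dotp_cs)
    also have "\<dots> \<le> dotp (\<beta>0 j) (\<beta>0 j)" using z dotp_self_nonneg[of "\<beta>0 j"] dotp_self_nonneg[of z]
      by (simp add: mult_left_le)
    also have "\<dots> = (\<Sum>i\<in>UNIV. (\<beta>0 j i)\<^sup>2)" unfolding dotp_def by (simp add: power2_eq_square)
    finally show "(relu (dotp (\<beta>0 j) z))\<^sup>2 \<le> (\<Sum>i\<in>UNIV. (\<beta>0 j i)\<^sup>2)" .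
  qed simp
  finally show ?thesis .
qed

lemma gauss_pnorm2:
  assumes m: "m > 0"
  shows "(\<integral>\<^sup>+\<beta>0. ennreal ((1 / real m) * pnorm2 m \<beta>0) \<partial>(gauss_init m :: ('d::finite) param measure))
     = ennreal (real CARD('d) * gvar TYPE('d))"
proof -
  have "(\<integral>\<^sup>+\<beta>0. ennreal ((1 / real m) * pnorm2 m \<beta>0) \<partial>(gauss_init m :: 'd param measure))
     = (\<integral>\<^sup>+\<beta>0. ennreal (1 / real m) * (\<Sum>j<m. \<Sum>i\<in>UNIV. ennreal ((\<beta>0 j i)\<^sup>2)) \<partial>(gauss_init m :: 'd param measure))"
    unfolding pnorm2_def
    by (intro nn_integral_cong) (simp add: sum_nonneg ennreal_mult[symmetric] sum_ennreal)
  also have "\<dots> = ennreal (1 / real m) * (\<Sum>j<m. \<Sum>i\<in>UNIV. \<integral>\<^sup>+\<beta>0. ennreal ((\<beta>0 j i)\<^sup>2) \<partial>(gauss_init m :: 'd param measure))"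
  proof -
    have meas: "(\<lambda>\<beta>0. ennreal ((\<beta>0 j i)\<^sup>2)) \<in> borel_measurable (gauss_init m :: 'd param measure)" if "j < m" for j i
      using meas_coord[OF that, of i] by measurable
    have meas2: "(\<lambda>\<beta>0. \<Sum>i\<in>UNIV. ennreal ((\<beta>0 j i)\<^sup>2)) \<in> borel_measurable (gauss_init m :: 'd param measure)" if "j < m" for j
      by (rule borel_measurable_sum) (rule meas[OF that])
    have meas3: "(\<lambda>\<beta>0. \<Sum>j<m. \<Sum>i\<in>UNIV. ennreal ((\<beta>0 j i)\<^sup>2)) \<in> borel_measurable (gauss_init m :: 'd param measure)"
      by (rule borel_measurable_sum) (rule meas2, simp)
    have "(\<integral>\<^sup>+\<beta>0. (\<Sum>j<m. \<Sum>i\<in>UNIV. ennreal ((\<beta>0 j i)\<^sup>2)) \<partial>(gauss_init m :: 'd param measure))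
       = (\<Sum>j<m. \<integral>\<^sup>+\<beta>0. (\<Sum>i\<in>UNIV. ennreal ((\<beta>0 j i)\<^sup>2)) \<partial>(gauss_init m :: 'd param measure))"
      by (rule nn_integral_sum) (rule meas2, simp)
    also have "\<dots> = (\<Sum>j<m. \<Sum>i\<in>UNIV. \<integral>\<^sup>+\<beta>0. ennreal ((\<beta>0 j i)\<^sup>2) \<partial>(gauss_init m :: 'd param measure))"
      by (intro sum.cong refl nn_integral_sum meas) auto
    finally show ?thesis by (subst nn_integral_cmult[OF meas3]) simp
  qed
  also have "\<dots> = ennreal (1 / real m) * (\<Sum>j<m. \<Sum>i\<in>(UNIV::'d set). ennreal (gvar TYPE('d)))"
    by (simp add: gauss_coord)
  also have "\<dots> = ennreal (real CARD('d) * gvar TYPE('d))"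
  proof -
    have g0: "gvar TYPE('d) \<ge> 0" unfolding gvar_def by (intro integral_nonneg_AE) auto
    have "ennreal (1 / real m) * (\<Sum>j<m. \<Sum>i\<in>(UNIV::'d set). ennreal (gvar TYPE('d)))
       = ennreal (1 / real m) * ennreal (real m * (real CARD('d) * gvar TYPE('d)))"
      using g0 by (simp add: ennreal_of_nat_eq_real_of_nat ennreal_mult[symmetric])
    also have "\<dots> = ennreal (1 / real m * (real m * (real CARD('d) * gvar TYPE('d))))"
      using g0 by (simp add: ennreal_mult[symmetric])
    finally show ?thesis using m by simp
  qed
  finally show ?thesis .
qed



lemma I_bound:
  fixes d :: "('s::finite) pmf" and \<psi> :: "'s \<Rightarrow> 'd::finite \<Rightarrow> real"
  assumes m: "m > 0" and z: "\<And>x. dotp (\<psi> x) (\<psi> x) \<le> 1"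
  shows "(\<integral>\<^sup>+u. \<integral>\<^sup>+\<beta>0. ennreal (measure_pmf.expectation d (\<lambda>x. (nn m u \<beta>0 (\<psi> x))\<^sup>2))
            \<partial>(gauss_init m :: 'd param measure) \<partial>measure_pmf (u_init m))
         \<le> ennreal (real CARD('d) * gvar TYPE('d))"
proof -
  define Q where "Q u \<beta>0 = measure_pmf.expectation d (\<lambda>x. (nn m u \<beta>0 (\<psi> x))\<^sup>2)" for u \<beta>0
  define U where "U = set_pmf (u_init m)"
  have finU: "finite U" unfolding U_def by (rule finite_set_u_init)
  have Q0: "Q u \<beta>0 \<ge> 0" for u \<beta>0 unfolding Q_def by (intro integral_nonneg_AE) auto
  have mQ: "(\<lambda>\<beta>0. Q u \<beta>0) \<in> borel_measurable (gauss_init m :: 'd param measure)" for u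
    unfolding Q_def by (rule meas_Q)
  have mQ': "(\<lambda>\<beta>0. ennreal (Q u \<beta>0 * pmf (u_init m) u)) \<in> borel_measurable (gauss_init m :: 'd param measure)" for u
    using mQ[of u] by measurable
  have "(\<integral>\<^sup>+u. \<integral>\<^sup>+\<beta>0. ennreal (Q u \<beta>0) \<partial>(gauss_init m :: 'd param measure) \<partial>measure_pmf (u_init m))
      = (\<Sum>u\<in>U. (\<integral>\<^sup>+\<beta>0. ennreal (Q u \<beta>0) \<partial>(gauss_init m :: 'd param measure)) * pmf (u_init m) u)"
    unfolding U_def by (rule nn_integral_measure_pmf_finite) (auto simp: finite_set_u_init)
  also have "\<dots> = (\<Sum>u\<in>U. \<integral>\<^sup>+\<beta>0. ennreal (Q u \<beta>0 * pmf (u_init m) u) \<partial>(gauss_init m :: 'd param measure))"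
    by (intro sum.cong refl, subst nn_integral_multc[symmetric]) (auto simp: mQ ennreal_mult Q0)
  also have "\<dots> = (\<integral>\<^sup>+\<beta>0. (\<Sum>u\<in>U. ennreal (Q u \<beta>0 * pmf (u_init m) u)) \<partial>(gauss_init m :: 'd param measure))"
    by (rule nn_integral_sum[symmetric]) (rule mQ')
  also have "\<dots> \<le> (\<integral>\<^sup>+\<beta>0. ennreal ((1 / real m) * pnorm2 m \<beta>0) \<partial>(gauss_init m :: 'd param measure))"
  proof (intro nn_integral_mono)
    fix \<beta>0 :: "'d param"
    have "(\<Sum>u\<in>U. ennreal (Q u \<beta>0 * pmf (u_init m) u)) = ennreal (\<Sum>u\<in>U. Q u \<beta>0 * pmf (u_init m) u)"
      using Q0 by (intro sum_ennreal) auto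
    also have "(\<Sum>u\<in>U. Q u \<beta>0 * pmf (u_init m) u) = measure_pmf.expectation (u_init m) (\<lambda>u. Q u \<beta>0)"
      unfolding U_def by (rule integral_measure_pmf_real[symmetric]) (auto simp: finite_set_u_init)
    also have "\<dots> = measure_pmf.expectation (u_init m) (\<lambda>u. \<Sum>x\<in>UNIV. (nn m u \<beta>0 (\<psi> x))\<^sup>2 * pmf d x)"
      unfolding Q_def exp_finite_sum ..
    also have "\<dots> = (\<Sum>x\<in>UNIV. measure_pmf.expectation (u_init m) (\<lambda>u. (nn m u \<beta>0 (\<psi> x))\<^sup>2) * pmf d x)"
      by (simp add: Bochner_Integration.integral_sum integrable_measure_pmf_finite finite_set_u_init)
    also have "\<dots> \<le> (\<Sum>x\<in>UNIV. (1 / real m) * pnorm2 m \<beta>0 * pmf d x)"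
      by (intro sum_mono mult_right_mono u_avg m z) auto
    also have "\<dots> = (1 / real m) * pnorm2 m \<beta>0"
    proof -
      have "(\<Sum>x\<in>UNIV. pmf d x) = 1" by (rule sum_pmf_eq_1) auto
      then show ?thesis by (simp only: sum_distrib_left[symmetric] mult_1_right)
    qed
    finally show "(\<Sum>u\<in>U. ennreal (Q u \<beta>0 * pmf (u_init m) u)) \<le> ennreal ((1 / real m) * pnorm2 m \<beta>0)"
      by (simp add: ennreal_leI)
  qed
  also have "\<dots> = ennreal (real CARD('d) * gvar TYPE('d))" by (rule gauss_pnorm2[OF m])
  finally show ?thesis unfolding Q_def .
qed



lemma integrate3:
  fixes Q1 Q2 :: "(nat \<Rightarrow> real) \<Rightarrow> ('d::finite) param \<Rightarrow> real"
  assumes q1: "\<And>u. (\<lambda>\<beta>0. Q1 u \<beta>0) \<in> borel_measurable (gauss_init m :: 'd param measure)"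
    and q2: "\<And>u. (\<lambda>\<beta>0. Q2 u \<beta>0) \<in> borel_measurable (gauss_init m :: 'd param measure)"
    and k: "k \<ge> 0" and c: "c \<ge> 0" and Q0: "\<And>u b. Q1 u b \<ge> 0" "\<And>u b. Q2 u b \<ge> 0"
  shows "(\<integral>\<^sup>+u. \<integral>\<^sup>+\<beta>0. ennreal (k * Q1 u \<beta>0 + k * Q2 u \<beta>0 + c) \<partial>(gauss_init m :: 'd param measure) \<partial>measure_pmf (u_init m))
    = ennreal k * (\<integral>\<^sup>+u. \<integral>\<^sup>+\<beta>0. ennreal (Q1 u \<beta>0) \<partial>(gauss_init m :: 'd param measure) \<partial>measure_pmf (u_init m))
    + ennreal k * (\<integral>\<^sup>+u. \<integral>\<^sup>+\<beta>0. ennreal (Q2 u \<beta>0) \<partial>(gauss_init m :: 'd param measure) \<partial>measure_pmf (u_init m))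
    + ennreal c"
proof -
  interpret G: prob_space "gauss_init m :: 'd param measure" by (rule gauss_prob)
  have inner: "(\<integral>\<^sup>+\<beta>0. ennreal (k * Q1 u \<beta>0 + k * Q2 u \<beta>0 + c) \<partial>(gauss_init m :: 'd param measure))
     = ennreal k * (\<integral>\<^sup>+\<beta>0. ennreal (Q1 u \<beta>0) \<partial>(gauss_init m :: 'd param measure))
     + ennreal k * (\<integral>\<^sup>+\<beta>0. ennreal (Q2 u \<beta>0) \<partial>(gauss_init m :: 'd param measure)) + ennreal c" for u
  proof -
    have m1: "(\<lambda>\<beta>0. ennreal k * ennreal (Q1 u \<beta>0)) \<in> borel_measurable (gauss_init m :: 'd param measure)"
      using q1[of u] by measurable
    have m2: "(\<lambda>\<beta>0. ennreal k * ennreal (Q2 u \<beta>0)) \<in> borel_measurable (gauss_init m :: 'd param measure)"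
      using q2[of u] by measurable
    have "(\<integral>\<^sup>+\<beta>0. ennreal (k * Q1 u \<beta>0 + k * Q2 u \<beta>0 + c) \<partial>(gauss_init m :: 'd param measure))
      = (\<integral>\<^sup>+\<beta>0. (ennreal k * ennreal (Q1 u \<beta>0) + ennreal k * ennreal (Q2 u \<beta>0)) + ennreal c \<partial>(gauss_init m :: 'd param measure))"
      using k c Q0 by (intro nn_integral_cong) (simp add: ennreal_plus ennreal_mult)
    also have "\<dots> = (\<integral>\<^sup>+\<beta>0. ennreal k * ennreal (Q1 u \<beta>0) \<partial>(gauss_init m :: 'd param measure))
       + (\<integral>\<^sup>+\<beta>0. ennreal k * ennreal (Q2 u \<beta>0) \<partial>(gauss_init m :: 'd param measure)) + ennreal c"
      using m1 m2 by (simp add: nn_integral_add G.emeasure_space_1)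
    also have "\<dots> = ennreal k * (\<integral>\<^sup>+\<beta>0. ennreal (Q1 u \<beta>0) \<partial>(gauss_init m :: 'd param measure))
     + ennreal k * (\<integral>\<^sup>+\<beta>0. ennreal (Q2 u \<beta>0) \<partial>(gauss_init m :: 'd param measure)) + ennreal c"
      using q1[of u] q2[of u] by (simp add: nn_integral_cmult)
    finally show ?thesis .
  qed
  show ?thesis
    unfolding inner
    by (simp add: nn_integral_add nn_integral_cmult measure_pmf.emeasure_space_1)
qed

lemma R_bound:
  fixes K0 R t t1 t2 t3 X :: real
  assumes "K0 \<ge> 0" "R\<^sup>2 \<ge> 1" "t1 \<ge> 0" "t2 \<ge> 0" "t3 \<ge> 0" "X \<le> t * (t1 * K0 + t2 * R\<^sup>2 + t3)" "t \<ge> 0"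
  shows "40 * K0 + 40 * R\<^sup>2 + 6 * X \<le> (40 * K0 + 40 + 6 * t * (t1 * K0 + t2 + t3)) * R\<^sup>2"
proof -
  have le: "a \<le> a * R\<^sup>2" if "a \<ge> 0" for a using mult_left_mono[of 1 "R\<^sup>2" a] that assms(2) by simp
  have "6 * X \<le> 6 * t * (t1 * K0) + 6 * t * t2 * R\<^sup>2 + 6 * t * t3"
    using assms(6) by (simp add: algebra_simps)
  moreover have "6 * t * (t1 * K0) \<le> 6 * t * (t1 * K0) * R\<^sup>2" using assms by (intro le) simp
  moreover have "6 * t * t3 \<le> 6 * t * t3 * R\<^sup>2" using assms by (intro le) simp
  moreover have "40 * K0 \<le> 40 * K0 * R\<^sup>2" using assms by (intro le) simp
  ultimately show ?thesis by (simp add: algebra_simps)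
qed


lemma t1: fixes I1 I2 :: ennreal assumes "I1 \<le> ennreal K0" "I2 \<le> ennreal K0"
  shows "ennreal (20 / real N) * I1 + ennreal (20 / real N) * I2 + ennreal c \<le> ennreal (20 / real N) * ennreal K0 + ennreal (20 / real N) * ennreal K0 + ennreal c"
  using assms by (intro add_mono mult_left_mono order_refl) simp_all
lemma t2: fixes K0 X R :: real assumes "K0 \<ge> 0" "X \<ge> 0"
  shows "ennreal (20 / real N) * ennreal K0 + ennreal (20 / real N) * ennreal K0 + ennreal ((40 * R\<^sup>2 + 6 * X) / real N)
         = ennreal (20 / real N * K0 + 20 / real N * K0 + (40 * R\<^sup>2 + 6 * X) / real N)"
proof -
  have a: "ennreal (20 / real N * K0) = ennreal (20 / real N) * ennreal K0" using assms by (intro ennreal_mult) auto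
  have b: "0 \<le> (40 * R\<^sup>2 + 6 * X) / real N" using assms by simp
  have c: "0 \<le> 20 / real N * K0" using assms by simp
  show ?thesis unfolding a[symmetric] using b c
    by (simp only: ennreal_plus[symmetric] add_nonneg_nonneg)
qed
lemma t3: fixes K0 X R :: real shows "20 / real N * K0 + 20 / real N * K0 + (40 * R\<^sup>2 + 6 * X) / real N = (40 * K0 + 40 * R\<^sup>2 + 6 * X) / real N"
  by (simp add: add_divide_distrib)


theorem lemma7:
  fixes \<tau> \<mu> \<tau>\<^sub>1 \<tau>\<^sub>2 \<tau>\<^sub>3 :: real
  assumes "\<tau> \<ge> 0" "0 \<le> \<mu>" "\<mu> < 1" "\<tau>\<^sub>1 \<ge> 0" "\<tau>\<^sub>2 \<ge> 0" "\<tau>\<^sub>3 \<ge> 0"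
  shows "\<exists>C::real. \<forall>(m::nat) (N::nat) (R::real)
            (\<phi>::'s::finite \<Rightarrow> 's \<Rightarrow> 'a::finite \<Rightarrow> 'd::finite \<Rightarrow> real)
            (\<xi>::'s \<Rightarrow> 's pmf \<Rightarrow> 'a \<Rightarrow> real)
            (\<beta>::(nat \<Rightarrow> real) \<Rightarrow> 'd param \<Rightarrow> 'd param)
            (s::'s) (dS::'s pmf) (a::'a) (s'::'s) (dS'::'s pmf) (a'::'a).
     0 < m \<and> 0 < N \<and> 1 \<le> R
     \<and> (\<forall>s x a. dotp (\<phi> s x a) (\<phi> s x a) \<le> 1)
     \<and> (\<forall>s d a. ennreal ((\<xi> s d a)\<^sup>2) \<le>
           ennreal \<tau>\<^sub>1 * (\<integral>\<^sup>+ u. \<integral>\<^sup>+ \<beta>0. ennreal (measure_pmf.expectation d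
                 (\<lambda>x. (nn m u \<beta>0 (\<phi> s x a))\<^sup>2)) \<partial>gauss_init m \<partial>measure_pmf (u_init m))
           + ennreal (\<tau>\<^sub>2 * R\<^sup>2 + \<tau>\<^sub>3))
     \<and> (\<forall>u \<beta>0. pnorm2 m (\<lambda>j i. \<beta> u \<beta>0 j i - \<beta>0 j i) \<le> R\<^sup>2)
     \<longrightarrow> (\<integral>\<^sup>+ u. \<integral>\<^sup>+ \<beta>0. \<integral>\<^sup>+ w.
            ennreal (pnorm2 m (\<lambda>j i.
                g_emp m u (\<beta> u \<beta>0) \<phi> \<xi> \<tau> \<mu> N s dS (fst w) a s' (snd w) a' j i
              - g_pop m u (\<beta> u \<beta>0) \<phi> \<xi> \<tau> \<mu> s dS a s' dS' a' j i))
          \<partial>measure_pmf (pair_pmf (samples N dS) (samples N dS'))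
          \<partial>gauss_init m \<partial>measure_pmf (u_init m))
        \<le> ennreal (C * R\<^sup>2 / real N)"
proof -
  define K0 where "K0 = real CARD('d) * gvar TYPE('d)"
  have K0: "K0 \<ge> 0" unfolding K0_def gvar_def by (intro mult_nonneg_nonneg integral_nonneg_AE) auto
  define C where "C = 40 * K0 + 40 + 6 * \<tau>\<^sup>2 * (\<tau>\<^sub>1 * K0 + \<tau>\<^sub>2 + \<tau>\<^sub>3)"
  show ?thesis
  proof (rule exI[of _ C], intro allI impI, elim conjE)
    fix m N :: nat and R :: real and \<phi> :: "'s \<Rightarrow> 's \<Rightarrow> 'a \<Rightarrow> 'd \<Rightarrow> real"
      and \<xi> :: "'s \<Rightarrow> 's pmf \<Rightarrow> 'a \<Rightarrow> real" and \<beta> :: "(nat \<Rightarrow> real) \<Rightarrow> 'd param \<Rightarrow> 'd param"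
      and s :: 's and dS :: "'s pmf" and a :: 'a and s' :: 's and dS' :: "'s pmf" and a' :: 'a
    assume m: "0 < m" and N: "0 < N" and R1: "1 \<le> R"
      and z: "\<forall>s x a. dotp (\<phi> s x a) (\<phi> s x a) \<le> 1"
      and xi: "\<forall>s d a. ennreal ((\<xi> s d a)\<^sup>2) \<le>
           ennreal \<tau>\<^sub>1 * (\<integral>\<^sup>+ u. \<integral>\<^sup>+ \<beta>0. ennreal (measure_pmf.expectation d
                 (\<lambda>x. (nn m u \<beta>0 (\<phi> s x a))\<^sup>2)) \<partial>gauss_init m \<partial>measure_pmf (u_init m))
           + ennreal (\<tau>\<^sub>2 * R\<^sup>2 + \<tau>\<^sub>3)"
      and Rb: "\<forall>u \<beta>0. pnorm2 m (\<lambda>j i. \<beta> u \<beta>0 j i - \<beta>0 j i) \<le> R\<^sup>2"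
    have z': "\<And>s x a. dotp (\<phi> s x a) (\<phi> s x a) \<le> 1" using z by blast
    define Q1 where "Q1 u \<beta>0 = measure_pmf.expectation dS (\<lambda>x. (nn m u \<beta>0 (\<phi> s x a))\<^sup>2)" for u \<beta>0
    define Q2 where "Q2 u \<beta>0 = measure_pmf.expectation dS' (\<lambda>x. (nn m u \<beta>0 (\<phi> s' x a'))\<^sup>2)" for u \<beta>0
    define X where "X = \<tau>\<^sup>2 * (\<xi> s dS a)\<^sup>2"
    define I1 where "I1 = (\<integral>\<^sup>+u. \<integral>\<^sup>+\<beta>0. ennreal (Q1 u \<beta>0) \<partial>(gauss_init m :: 'd param measure) \<partial>measure_pmf (u_init m))"
    define I2 where "I2 = (\<integral>\<^sup>+u. \<integral>\<^sup>+\<beta>0. ennreal (Q2 u \<beta>0) \<partial>(gauss_init m :: 'd param measure) \<partial>measure_pmf (u_init m))"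
    have Q10: "Q1 u b \<ge> 0" for u b unfolding Q1_def by (intro integral_nonneg_AE) auto
    have Q20: "Q2 u b \<ge> 0" for u b unfolding Q2_def by (intro integral_nonneg_AE) auto
    have I1: "I1 \<le> ennreal K0" unfolding I1_def Q1_def K0_def
      by (rule I_bound[OF m, of "\<lambda>x. \<phi> s x a"]) (use z in auto)
    have I2: "I2 \<le> ennreal K0" unfolding I2_def Q2_def K0_def
      by (rule I_bound[OF m, of "\<lambda>x. \<phi> s' x a'"]) (use z in auto)
    have Xb: "X \<le> \<tau>\<^sup>2 * (\<tau>\<^sub>1 * K0 + \<tau>\<^sub>2 * R\<^sup>2 + \<tau>\<^sub>3)"
    proof -
      have "ennreal ((\<xi> s dS a)\<^sup>2) \<le> ennreal \<tau>\<^sub>1 * I1 + ennreal (\<tau>\<^sub>2 * R\<^sup>2 + \<tau>\<^sub>3)"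
        using xi unfolding I1_def Q1_def by blast
      also have "\<dots> \<le> ennreal \<tau>\<^sub>1 * ennreal K0 + ennreal (\<tau>\<^sub>2 * R\<^sup>2 + \<tau>\<^sub>3)"
        using I1 by (intro add_mono mult_left_mono) auto
      also have "\<dots> = ennreal (\<tau>\<^sub>1 * K0 + \<tau>\<^sub>2 * R\<^sup>2 + \<tau>\<^sub>3)"
        using assms K0 by (simp add: ennreal_mult ennreal_plus[symmetric])
      finally have "(\<xi> s dS a)\<^sup>2 \<le> \<tau>\<^sub>1 * K0 + \<tau>\<^sub>2 * R\<^sup>2 + \<tau>\<^sub>3"
        using assms K0 by (subst (asm) ennreal_le_iff) auto
      then show ?thesis unfolding X_def by (intro mult_left_mono) auto
    qed
    have X0: "X \<ge> 0" unfolding X_def by simp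
    have pw: "(\<integral>\<^sup>+ w.
            ennreal (pnorm2 m (\<lambda>j i.
                g_emp m u (\<beta> u \<beta>0) \<phi> \<xi> \<tau> \<mu> N s dS (fst w) a s' (snd w) a' j i
              - g_pop m u (\<beta> u \<beta>0) \<phi> \<xi> \<tau> \<mu> s dS a s' dS' a' j i))
          \<partial>measure_pmf (pair_pmf (samples N dS) (samples N dS')))
        \<le> ennreal ((20 / real N) * Q1 u \<beta>0 + (20 / real N) * Q2 u \<beta>0 + (40 * R\<^sup>2 + 6 * X) / real N)"
      if u: "u \<in> set_pmf (u_init m)" for u and \<beta>0 :: "'d param"
    proof -
      have finW: "finite (set_pmf (pair_pmf (samples N dS) (samples N dS')))"
        by (auto intro!: finite_set_samples)
      have "(\<integral>\<^sup>+ w.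
            ennreal (pnorm2 m (\<lambda>j i.
                g_emp m u (\<beta> u \<beta>0) \<phi> \<xi> \<tau> \<mu> N s dS (fst w) a s' (snd w) a' j i
              - g_pop m u (\<beta> u \<beta>0) \<phi> \<xi> \<tau> \<mu> s dS a s' dS' a' j i))
          \<partial>measure_pmf (pair_pmf (samples N dS) (samples N dS')))
        = ennreal (measure_pmf.expectation (pair_pmf (samples N dS) (samples N dS')) (\<lambda>w. pnorm2 m (\<lambda>j i.
                g_emp m u (\<beta> u \<beta>0) \<phi> \<xi> \<tau> \<mu> N s dS (fst w) a s' (snd w) a' j i
              - g_pop m u (\<beta> u \<beta>0) \<phi> \<xi> \<tau> \<mu> s dS a s' dS' a' j i)))"
        by (intro nn_integral_eq_integral integrable_measure_pmf_finite finW AE_I2 pnorm2_nonneg)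
      also have "\<dots> \<le> ennreal ((20 * Q1 u \<beta>0 + 20 * Q2 u \<beta>0 + 40 * R\<^sup>2 + 6 * X) / real N)"
        using inner_bound[OF m N u_init_support[OF u] z' Rb[rule_format] assms(2,3), where \<xi>=\<xi> and \<tau>=\<tau> and s=s and a=a and s'=s' and a'=a' and dS=dS and dS'=dS']
        by (intro ennreal_leI) (simp add: Q1_def Q2_def X_def mult.assoc)
      also have "(20 * Q1 u \<beta>0 + 20 * Q2 u \<beta>0 + 40 * R\<^sup>2 + 6 * X) / real N
          = (20 / real N) * Q1 u \<beta>0 + (20 / real N) * Q2 u \<beta>0 + (40 * R\<^sup>2 + 6 * X) / real N"
        by (simp add: add_divide_distrib)
      finally show ?thesis .
    qed
    have "(\<integral>\<^sup>+ u. \<integral>\<^sup>+ \<beta>0. \<integral>\<^sup>+ w.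
            ennreal (pnorm2 m (\<lambda>j i.
                g_emp m u (\<beta> u \<beta>0) \<phi> \<xi> \<tau> \<mu> N s dS (fst w) a s' (snd w) a' j i
              - g_pop m u (\<beta> u \<beta>0) \<phi> \<xi> \<tau> \<mu> s dS a s' dS' a' j i))
          \<partial>measure_pmf (pair_pmf (samples N dS) (samples N dS'))
          \<partial>gauss_init m \<partial>measure_pmf (u_init m))
       \<le> (\<integral>\<^sup>+ u. \<integral>\<^sup>+ \<beta>0. ennreal ((20 / real N) * Q1 u \<beta>0 + (20 / real N) * Q2 u \<beta>0 + (40 * R\<^sup>2 + 6 * X) / real N)
          \<partial>(gauss_init m :: 'd param measure) \<partial>measure_pmf (u_init m))"
      by (intro nn_integral_mono_AE) (unfold AE_measure_pmf_iff, intro ballI nn_integral_mono pw, assumption)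
    also have "\<dots> = ennreal (20 / real N) * I1 + ennreal (20 / real N) * I2 + ennreal ((40 * R\<^sup>2 + 6 * X) / real N)"
      unfolding I1_def I2_def
    proof (rule integrate3)
      show "(\<lambda>\<beta>0. Q1 u \<beta>0) \<in> borel_measurable (gauss_init m :: 'd param measure)" for u
        unfolding Q1_def by (rule meas_Q)
      show "(\<lambda>\<beta>0. Q2 u \<beta>0) \<in> borel_measurable (gauss_init m :: 'd param measure)" for u
        unfolding Q2_def by (rule meas_Q)
      show "0 \<le> 20 / real N" by simp
      show "0 \<le> (40 * R\<^sup>2 + 6 * X) / real N" using X0 by simp
      show "0 \<le> Q1 u b" for u b by (rule Q10)
      show "0 \<le> Q2 u b" for u b by (rule Q20)
    qed
    also have "\<dots> \<le> ennreal (20 / real N) * ennreal K0 + ennreal (20 / real N) * ennreal K0 + ennreal ((40 * R\<^sup>2 + 6 * X) / real N)"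
      using I1 I2 by (rule t1)
    also have "\<dots> = ennreal ((40 * K0 + 40 * R\<^sup>2 + 6 * X) / real N)"
    proof -
      have "ennreal (20 / real N) * ennreal K0 + ennreal (20 / real N) * ennreal K0 + ennreal ((40 * R\<^sup>2 + 6 * X) / real N)
         = ennreal (20 / real N * K0 + 20 / real N * K0 + (40 * R\<^sup>2 + 6 * X) / real N)"
        using K0 X0 by (rule t2)
      also have "20 / real N * K0 + 20 / real N * K0 + (40 * R\<^sup>2 + 6 * X) / real N = (40 * K0 + 40 * R\<^sup>2 + 6 * X) / real N"
        by (rule t3)
      finally show ?thesis .
    qed
    also have "\<dots> \<le> ennreal (C * R\<^sup>2 / real N)"
    proof (intro ennreal_leI divide_right_mono)
      have R2: "R\<^sup>2 \<ge> 1" using R1 by (simp add: one_le_power)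
      show "40 * K0 + 40 * R\<^sup>2 + 6 * X \<le> C * R\<^sup>2"
        unfolding C_def by (rule R_bound[OF K0 R2 assms(4,5,6) Xb]) simp
    qed simp
    finally show "(\<integral>\<^sup>+ u. \<integral>\<^sup>+ \<beta>0. \<integral>\<^sup>+ w.
            ennreal (pnorm2 m (\<lambda>j i.
                g_emp m u (\<beta> u \<beta>0) \<phi> \<xi> \<tau> \<mu> N s dS (fst w) a s' (snd w) a' j i
              - g_pop m u (\<beta> u \<beta>0) \<phi> \<xi> \<tau> \<mu> s dS a s' dS' a' j i))
          \<partial>measure_pmf (pair_pmf (samples N dS) (samples N dS'))
          \<partial>gauss_init m \<partial>measure_pmf (u_init m))
        \<le> ennreal (C * R\<^sup>2 / real N)" .
  qed
qed


end
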